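(* For every integer $k\ge 2$, the generating function of the number of edges of the $k$-Pell graphs $\Pi_{n,k}$ is $$\sum_{n\geq 0}|E(\Pi_{n,k})|\,t^{n}=\frac{(k-1+t)\,t}{(1-kt-t^{2})^{2}}.$$
   Context: For an integer $k\ge 2$, a $k$-Pell string is a finite word over the alphabet $\{0,1,\ldots,k-1,kk\}$, i.e. a word over $\{0,1,\ldots,k\}$ in which every maximal run of the letter $k$ has even length. For $n\ge 0$, the $k$-Pell graph $\Pi_{n,k}$ has as vertices all $k$-Pell strings of length $n$ (so $\Pi_{0,k}$ is a single vertex, the empty word), and two vertices are adjacent if one is obtained from the other either by replacing a single letter $i$ by $i+1$ (or vice versa) for some $i\in\{0,1,\ldots,k-2\}$, or by replacing one factor $(k-1)(k-1)$ by $kk$ (or vice versa), in such a way that the resulting string is again a $k$-Pell string. *)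

theory Defs
  imports "HOL-Computational_Algebra.Formal_Power_Series"
begin

definition pell_blocks :: "nat \<Rightarrow> nat list set" where
  "pell_blocks k = {[i] | i. i < k} \<union> {[k, k]}"

text \<open>k-Pell strings of length n: words over {0,...,k-1,kk}, written out over {0,...,k}.\<close>
definition pell_strings :: "nat \<Rightarrow> nat \<Rightarrow> nat list set" where
  "pell_strings n k =
     {concat bs | bs. set bs \<subseteq> pell_blocks k \<and> length (concat bs) = n}"

definition pell_step :: "nat \<Rightarrow> nat list \<Rightarrow> nat list \<Rightarrow> bool" where
  "pell_step k u v \<longleftrightarrow>
     (\<exists>i < length u. u ! i + 2 \<le> k \<and> v = u[i := u ! i + 1]) \<or>
     (\<exists>i. Suc i < length u \<and> u ! i = k - 1 \<and> u ! Suc i = k - 1 \<and>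
          v = u[i := k, Suc i := k])"

definition pell_adj :: "nat \<Rightarrow> nat list \<Rightarrow> nat list \<Rightarrow> bool" where
  "pell_adj k u v \<longleftrightarrow> pell_step k u v \<or> pell_step k v u"

definition pell_edges :: "nat \<Rightarrow> nat \<Rightarrow> nat list set set" where
  "pell_edges n k =
     {{u, v} | u v. u \<in> pell_strings n k \<and> v \<in> pell_strings n k \<and> pell_adj k u v}"

end

theory Submission
  imports Defs
begin
unbundle fps_syntax

fun pl :: "nat \<Rightarrow> nat list \<Rightarrow> bool" where
  "pl k [] = True"
| "pl k [a] = (a < k)"
| "pl k (a # b # w) = ((a < k \<and> pl k (b # w)) \<or> (a = k \<and> b = k \<and> pl k w))"

lemma pl_Cons: "pl k (a # w) \<longleftrightarrow> (a < k \<and> pl k w) \<or> (a = k \<and> w \<noteq> [] \<and> hd w = k \<and> pl k (tl w))"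
  by (cases w) auto

lemma pl_concat: "set bs \<subseteq> pell_blocks k \<Longrightarrow> pl k (concat bs)"
proof (induction bs)
  case Nil show ?case by simp
next
  case (Cons b bs)
  then have "pl k (concat bs)" and "b \<in> pell_blocks k" by auto
  then show ?case by (auto simp: pell_blocks_def pl_Cons)
qed

lemma pl_concat_ex: "pl k w \<Longrightarrow> \<exists>bs. set bs \<subseteq> pell_blocks k \<and> concat bs = w"
proof (induction k w rule: pl.induct)
  case (1 k) show ?case by (rule exI[of _ "[]"]) simp
next
  case (2 k a) then show ?case by (intro exI[of _ "[[a]]"]) (auto simp: pell_blocks_def)
next
  case (3 k a b w)
  show ?case
  proof (cases "a < k \<and> pl k (b # w)")
    case True
    then obtain bs where "set bs \<subseteq> pell_blocks k" "concat bs = b # w" using "3.IH"(1) by blast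
    then show ?thesis using True by (intro exI[of _ "[a] # bs"]) (auto simp: pell_blocks_def)
  next
    case False
    then have "a = k" "b = k" "pl k w" using "3.prems" by auto
    then obtain bs where "set bs \<subseteq> pell_blocks k" "concat bs = w" using "3.IH"(2) by blast
    then show ?thesis using \<open>a = k\<close> \<open>b = k\<close> by (intro exI[of _ "[k,k] # bs"]) (auto simp: pell_blocks_def)
  qed
qed

lemma mem_P: "u \<in> pell_strings n k \<longleftrightarrow> pl k u \<and> length u = n"
  unfolding pell_strings_def using pl_concat pl_concat_ex by blast

lemma pl_set: "pl k u \<Longrightarrow> set u \<subseteq> {..k}"
  by (induction k u rule: pl.induct) auto

lemma finite_P: "finite (pell_strings n k)"
proof (rule finite_subset)
  show "pell_strings n k \<subseteq> {xs. set xs \<subseteq> {..k} \<and> length xs = n}"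
    using pl_set mem_P by blast
  show "finite {xs. set xs \<subseteq> {..k} \<and> length xs = n}"
    by (rule finite_lists_length_eq) simp
qed

lemma step_len: "pell_step k u v \<Longrightarrow> length v = length u"
  by (auto simp: pell_step_def)

lemma step_Nil: "\<not> pell_step k [] v"
  by (auto simp: pell_step_def)

lemma step_Cons: "pell_step k (a # u) (b # v) \<longleftrightarrow>
   (a = b \<and> pell_step k u v) \<or> (u = v \<and> a + 2 \<le> k \<and> b = Suc a) \<or>
   (a = k - 1 \<and> b = k \<and> (\<exists>u'. u = (k - 1) # u' \<and> v = k # u'))"
proof
  assume "pell_step k (a # u) (b # v)"
  then consider (t1) i where "i < Suc (length u)" "(a#u) ! i + 2 \<le> k" "b # v = (a#u)[i := (a#u) ! i + 1]"
    | (t2) i where "Suc i < Suc (length u)" "(a#u) ! i = k - 1" "(a#u) ! Suc i = k - 1"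
         "b # v = (a#u)[i := k, Suc i := k]"
    unfolding pell_step_def by auto
  then show "(a = b \<and> pell_step k u v) \<or> (u = v \<and> a + 2 \<le> k \<and> b = Suc a) \<or>
   (a = k - 1 \<and> b = k \<and> (\<exists>u'. u = (k - 1) # u' \<and> v = k # u'))"
  proof cases
    case (t1 i)
    then show ?thesis
    proof (cases i)
      case 0 then show ?thesis using t1 by auto
    next
      case (Suc j) then show ?thesis using t1 by (auto simp: pell_step_def)
    qed
  next
    case (t2 i)
    then show ?thesis
    proof (cases i)
      case 0 then show ?thesis using t2 by (cases u) auto
    next
      case (Suc j) then show ?thesis using t2 by (auto simp: pell_step_def)
    qed
  qed
next
  assume "(a = b \<and> pell_step k u v) \<or> (u = v \<and> a + 2 \<le> k \<and> b = Suc a) \<or>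
   (a = k - 1 \<and> b = k \<and> (\<exists>u'. u = (k - 1) # u' \<and> v = k # u'))"
  then consider (c1) "a = b" "pell_step k u v" | (c2) "u = v" "a + 2 \<le> k" "b = Suc a"
    | (c3) u' where "a = k - 1" "b = k" "u = (k - 1) # u'" "v = k # u'" by blast
  then show "pell_step k (a # u) (b # v)"
  proof cases
    case c1
    then consider (t1) i where "i < length u" "u ! i + 2 \<le> k" "v = u[i := u ! i + 1]"
      | (t2) i where "Suc i < length u" "u ! i = k - 1" "u ! Suc i = k - 1" "v = u[i := k, Suc i := k]"
      unfolding pell_step_def by auto
    then show ?thesis
    proof cases
      case (t1 i) then show ?thesis unfolding pell_step_def using c1
        by (intro disjI1 exI[of _ "Suc i"]) auto
    next
      case (t2 i) then show ?thesis unfolding pell_step_def using c1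
        by (intro disjI2 exI[of _ "Suc i"]) auto
    qed
  next
    case c2 then show ?thesis unfolding pell_step_def by (intro disjI1 exI[of _ 0]) auto
  next
    case c3 then show ?thesis unfolding pell_step_def by (intro disjI2 exI[of _ 0]) auto
  qed
qed


definition dp :: "nat \<Rightarrow> nat \<Rightarrow> (nat list \<times> nat list) set" where
  "dp n k = {(u, v). u \<in> pell_strings n k \<and> v \<in> pell_strings n k \<and> pell_step k u v}"

lemma step_sum: "k \<ge> 1 \<Longrightarrow> pell_step k u v \<Longrightarrow> sum_list u < sum_list v"
proof (induction u arbitrary: v)
  case Nil then show ?case by (simp add: step_Nil)
next
  case (Cons a u)
  from step_len[OF Cons.prems(2)] obtain b v' where v: "v = b # v'" by (cases v) auto
  show ?case using Cons.prems Cons.IH unfolding v step_Cons by auto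
qed

lemma finite_dp: "finite (dp n k)"
  unfolding dp_def by (rule finite_subset[of _ "pell_strings n k \<times> pell_strings n k"]) (auto simp: finite_P)

lemma card_edges: assumes "k \<ge> 1" shows "card (pell_edges n k) = card (dp n k)"
proof -
  have "pell_edges n k = (\<lambda>(u, v). {u, v}) ` dp n k"
    unfolding pell_edges_def dp_def pell_adj_def by (auto simp: insert_commute)
  moreover have "inj_on (\<lambda>(u, v). {u, v}) (dp n k)"
  proof (rule inj_onI, clarsimp)
    fix u v u' v' assume "(u, v) \<in> dp n k" "(u', v') \<in> dp n k" "{u, v} = {u', v'}"
    then have s: "pell_step k u v" "pell_step k u' v'" and d: "u = u' \<and> v = v' \<or> u = v' \<and> v = u'"
      unfolding dp_def doubleton_eq_iff by auto
    show "u = u' \<and> v = v'"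
    proof (rule ccontr)
      assume "\<not> (u = u' \<and> v = v')"
      with d have "u = v'" "v = u'" by auto
      with s step_sum[OF assms] show False by (metis less_asym)
    qed
  qed
  ultimately show ?thesis by (simp add: card_image)
qed

lemma P0: "pell_strings 0 k = {[]}" by (auto simp: mem_P)
lemma P1: "pell_strings (Suc 0) k = (\<lambda>i. [i]) ` {..<k}"
  by (auto simp: mem_P length_Suc_conv)

lemma P_SS: "pell_strings (Suc (Suc n)) k =
  (\<lambda>(i, w). i # w) ` ({..<k} \<times> pell_strings (Suc n) k) \<union> (\<lambda>w. k # k # w) ` pell_strings n k"
proof (rule set_eqI, rule iffI)
  fix u assume "u \<in> pell_strings (Suc (Suc n)) k"
  then obtain a w where u: "u = a # w" "pl k (a # w)" "length w = Suc n"
    by (auto simp: mem_P length_Suc_conv)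
  then show "u \<in> (\<lambda>(i, w). i # w) ` ({..<k} \<times> pell_strings (Suc n) k) \<union> (\<lambda>w. k # k # w) ` pell_strings n k"
    by (cases w) (auto simp: mem_P pl_Cons)
next
  fix u assume "u \<in> (\<lambda>(i, w). i # w) ` ({..<k} \<times> pell_strings (Suc n) k) \<union> (\<lambda>w. k # k # w) ` pell_strings n k"
  then show "u \<in> pell_strings (Suc (Suc n)) k" by (auto simp: mem_P pl_Cons)
qed

lemma card_P0: "card (pell_strings 0 k) = 1" by (simp add: P0)
lemma card_P1: "card (pell_strings (Suc 0) k) = k" by (simp add: P1 card_image inj_on_def)

lemma card_P_SS: "card (pell_strings (Suc (Suc n)) k) = k * card (pell_strings (Suc n) k) + card (pell_strings n k)"
proof -
  have "card ((\<lambda>(i, w). i # w) ` ({..<k} \<times> pell_strings (Suc n) k) \<union> (\<lambda>w. k # k # w) ` pell_strings n k)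
     = card ((\<lambda>(i, w). i # w) ` ({..<k} \<times> pell_strings (Suc n) k)) + card ((\<lambda>w. k # k # w) ` pell_strings n k)"
    by (rule card_Un_disjoint) (auto simp: finite_P)
  also have "card ((\<lambda>(i, w). i # w) ` ({..<k} \<times> pell_strings (Suc n) k)) = k * card (pell_strings (Suc n) k)"
    by (subst card_image) (auto simp: inj_on_def card_cartesian_product)
  also have "card ((\<lambda>w. k # k # w) ` pell_strings n k) = card (pell_strings n k)"
    by (subst card_image) (auto simp: inj_on_def)
  finally show ?thesis by (simp add: P_SS)
qed

lemma dp0: "dp 0 k = {}" by (auto simp: dp_def P0 step_Nil)

lemma dp1: "dp (Suc 0) k = (\<lambda>i. ([i], [Suc i])) ` {..<k - 1}"
  by (auto simp: dp_def P1 step_Cons step_Nil)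

lemma card_dp1: "card (dp (Suc 0) k) = k - 1"
  by (simp add: dp1 card_image inj_on_def)


lemma dp_SS:
  assumes k: "k \<ge> 2"
  shows "dp (Suc (Suc n)) k =
     (\<lambda>(i, u, v). (i # u, i # v)) ` ({..<k} \<times> dp (Suc n) k) \<union>
     (\<lambda>(u, v). (k # k # u, k # k # v)) ` dp n k \<union>
     (\<lambda>(i, w). (i # w, Suc i # w)) ` ({..<k - 1} \<times> pell_strings (Suc n) k) \<union>
     (\<lambda>w. ((k - 1) # (k - 1) # w, k # k # w)) ` pell_strings n k"
  (is "_ = ?A \<union> ?B \<union> ?C \<union> ?E")
proof (rule set_eqI, rule iffI)
  fix x assume "x \<in> dp (Suc (Suc n)) k"
  then obtain u v where x: "x = (u, v)" and u: "u \<in> pell_strings (Suc (Suc n)) k"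
    and v: "v \<in> pell_strings (Suc (Suc n)) k" and st: "pell_step k u v"
    unfolding dp_def by auto
  from u consider (u1) i u' where "i < k" "u' \<in> pell_strings (Suc n) k" "u = i # u'"
    | (u2) u' where "u' \<in> pell_strings n k" "u = k # k # u'"
    unfolding P_SS by auto
  then show "x \<in> ?A \<union> ?B \<union> ?C \<union> ?E"
  proof cases
    case (u1 i u')
    from v consider (v1) j v' where "j < k" "v' \<in> pell_strings (Suc n) k" "v = j # v'"
      | (v2) v' where "v' \<in> pell_strings n k" "v = k # k # v'"
      unfolding P_SS by auto
    then show ?thesis
    proof cases
      case (v1 j v')
      with u1 st have "(i = j \<and> pell_step k u' v') \<or> (u' = v' \<and> i + 2 \<le> k \<and> j = Suc i)"
        by (auto simp: step_Cons)
      then show ?thesis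
      proof
        assume "i = j \<and> pell_step k u' v'"
        then have "x = (\<lambda>(i, u, v). (i # u, i # v)) (i, u', v')" "(i, u', v') \<in> {..<k} \<times> dp (Suc n) k"
          using u1 v1 x by (auto simp: dp_def)
        then show ?thesis by blast
      next
        assume "u' = v' \<and> i + 2 \<le> k \<and> j = Suc i"
        then have "x = (\<lambda>(i, w). (i # w, Suc i # w)) (i, u')" "(i, u') \<in> {..<k - 1} \<times> pell_strings (Suc n) k"
          using u1 v1 x by auto
        then show ?thesis by blast
      qed
    next
      case (v2 v')
      with u1 st k have "i = k - 1" "u' = (k - 1) # v'"
        by (auto simp: step_Cons)
      then have "x = (\<lambda>w. ((k - 1) # (k - 1) # w, k # k # w)) v'"
        using u1 v2 x by auto
      then show ?thesis using v2 by blast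
    qed
  next
    case (u2 u')
    from v consider (v1) j v' where "j < k" "v' \<in> pell_strings (Suc n) k" "v = j # v'"
      | (v2) v' where "v' \<in> pell_strings n k" "v = k # k # v'"
      unfolding P_SS by auto
    then show ?thesis
    proof cases
      case (v1 j v')
      with u2 st k have False by (auto simp: step_Cons)
      then show ?thesis ..
    next
      case (v2 v')
      with u2 st k have "pell_step k u' v'" by (auto simp: step_Cons)
      then have "x = (\<lambda>(u, v). (k # k # u, k # k # v)) (u', v')" "(u', v') \<in> dp n k"
        using u2 v2 x by (auto simp: dp_def)
      then show ?thesis by blast
    qed
  qed
next
  fix x assume "x \<in> ?A \<union> ?B \<union> ?C \<union> ?E"
  then show "x \<in> dp (Suc (Suc n)) k"
  proof (elim UnE)
    assume "x \<in> ?A" then show ?thesis by (auto simp: dp_def P_SS step_Cons)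
  next
    assume "x \<in> ?B" then show ?thesis by (auto simp: dp_def P_SS step_Cons)
  next
    assume "x \<in> ?C" then show ?thesis by (auto simp: dp_def P_SS step_Cons)
  next
    assume "x \<in> ?E"
    then obtain w where w: "w \<in> pell_strings n k" "x = ((k - 1) # (k - 1) # w, k # k # w)" by auto
    have "(k - 1) # w \<in> pell_strings (Suc n) k" using w k by (auto simp: mem_P pl_Cons)
    then show ?thesis using w k by (auto simp: dp_def P_SS step_Cons)
  qed
qed


lemma card_dp_SS:
  assumes k: "k \<ge> 2"
  shows "card (dp (Suc (Suc n)) k) = k * card (dp (Suc n) k) + card (dp n k)
     + (k - 1) * card (pell_strings (Suc n) k) + card (pell_strings n k)"
proof -
  let ?A = "(\<lambda>(i, u, v). (i # u, i # v)) ` ({..<k} \<times> dp (Suc n) k)"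
  let ?B = "(\<lambda>(u, v). (k # k # u, k # k # v)) ` dp n k"
  let ?C = "(\<lambda>(i, w). (i # w, Suc i # w)) ` ({..<k - 1} \<times> pell_strings (Suc n) k)"
  let ?E = "(\<lambda>w. ((k - 1) # (k - 1) # w, k # k # w)) ` pell_strings n k"
  have fA: "finite ?A" and fB: "finite ?B" and fC: "finite ?C" and fE: "finite ?E"
    by (auto simp: finite_dp finite_P)
  have cA: "card ?A = k * card (dp (Suc n) k)"
    by (subst card_image) (auto simp: inj_on_def card_cartesian_product)
  have cB: "card ?B = card (dp n k)"
    by (subst card_image) (auto simp: inj_on_def)
  have cC: "card ?C = (k - 1) * card (pell_strings (Suc n) k)"
    by (subst card_image) (auto simp: inj_on_def card_cartesian_product)
  have cE: "card ?E = card (pell_strings n k)"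
    by (subst card_image) (auto simp: inj_on_def)
  have d1: "?A \<inter> ?B = {}" by auto
  have d2: "(?A \<union> ?B) \<inter> ?C = {}" by auto
  have d3: "(?A \<union> ?B \<union> ?C) \<inter> ?E = {}" using k by auto
  have "card (?A \<union> ?B \<union> ?C \<union> ?E) = card ?A + card ?B + card ?C + card ?E"
    using fA fB fC fE d1 d2 d3 by (simp add: card_Un_disjoint)
  then show ?thesis using cA cB cC cE dp_SS[OF k, of n] by simp
qed


lemma nat_cases3:
  obtains "n = 0" | "n = Suc 0" | m where "n = Suc (Suc m)"
  by (metis not0_implies_Suc)

lemma coeff_Q:
  fixes a :: "nat \<Rightarrow> rat"
  shows "(Abs_fps a * (1 - fps_const c * fps_X - fps_X ^ 2)) $ n =
    a n - c * (if n = 0 then 0 else a (n - 1)) - (if n < 2 then 0 else a (n - 2))"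
proof -
  have "Abs_fps a * (1 - fps_const c * fps_X - fps_X ^ 2) =
        Abs_fps a - fps_const c * (Abs_fps a * fps_X) - Abs_fps a * fps_X ^ 2"
    by (simp add: algebra_simps)
  then show ?thesis by (simp add: fps_X_power_mult_right_nth del: power_Suc)
qed

theorem proposition3p1:
  fixes k :: nat
  assumes "k \<ge> 2"
  shows "(Abs_fps (\<lambda>n. of_nat (card (pell_edges n k))) :: rat fps) =
         (fps_const (of_nat k - 1) + fps_X) * fps_X /
         (1 - fps_const (of_nat k) * fps_X - fps_X ^ 2) ^ 2"
proof -
  define p where "p n = card (pell_strings n k)" for n
  define e where "e n = card (dp n k)" for n
  define Q :: "rat fps" where "Q = 1 - fps_const (of_nat k) * fps_X - fps_X ^ 2"
  define N :: "rat fps" where "N = (fps_const (of_nat k - 1) + fps_X) * fps_X"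
  define P :: "rat fps" where "P = Abs_fps (\<lambda>n. of_nat (p n))"
  define E :: "rat fps" where "E = Abs_fps (\<lambda>n. of_nat (e n))"
  have lhs: "Abs_fps (\<lambda>n. of_nat (card (pell_edges n k))) = E"
    unfolding E_def e_def using assms by (simp add: card_edges)
  have p0: "p 0 = 1" and p1: "p (Suc 0) = k" and pSS: "\<And>n. p (Suc (Suc n)) = k * p (Suc n) + p n"
    unfolding p_def by (simp_all add: card_P0 card_P1 card_P_SS)
  have e0: "e 0 = 0" and e1: "e (Suc 0) = k - 1"
    and eSS: "\<And>n. e (Suc (Suc n)) = k * e (Suc n) + e n + (k - 1) * p (Suc n) + p n"
    unfolding e_def p_def using assms by (simp_all add: dp0 card_dp1 card_dp_SS)
  have eSSr: "\<And>n. (of_nat (e (Suc (Suc n))) :: rat) = of_nat k * of_nat (e (Suc n)) + of_nat (e n)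
      + (of_nat k - 1) * of_nat (p (Suc n)) + of_nat (p n)"
  proof -
    fix n
    have "(of_nat (k - 1) :: rat) = of_nat k - 1" using assms by (simp add: of_nat_diff)
    then show "(of_nat (e (Suc (Suc n))) :: rat) = of_nat k * of_nat (e (Suc n)) + of_nat (e n)
      + (of_nat k - 1) * of_nat (p (Suc n)) + of_nat (p n)"
      unfolding eSS by (metis of_nat_add of_nat_mult)
  qed
  have e1r: "(of_nat (e (Suc 0)) :: rat) = of_nat k - 1" using assms by (simp add: e1 of_nat_diff)
  have PQ: "P * Q = 1"
  proof (rule fps_ext)
    fix n
    show "(P * Q) $ n = 1 $ n"
      unfolding P_def Q_def coeff_Q
      by (cases n rule: nat_cases3) (auto simp: p0 p1 pSS)
  qed
  have EQ: "E * Q = N * P"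
  proof (rule fps_ext)
    fix n
    show "(E * Q) $ n = (N * P) $ n"
    proof -
      have "N * P = fps_const (of_nat k - 1) * (P * fps_X) + P * fps_X ^ 2"
        unfolding N_def by (simp add: algebra_simps power2_eq_square)
      then have NP: "(N * P) $ n = (of_nat k - 1) * (if n = 0 then 0 else of_nat (p (n - 1)))
          + (if n < 2 then 0 else of_nat (p (n - 2)))"
        by (simp add: fps_X_power_mult_right_nth P_def del: power_Suc)
      show ?thesis
        unfolding E_def Q_def coeff_Q NP
        using assms
        by (cases n rule: nat_cases3) (auto simp: e0 e1r eSSr p0 algebra_simps)
    qed
  qed
  have Q0: "Q ^ 2 \<noteq> 0"
  proof
    assume "Q ^ 2 = 0"
    then have "Q = 0" by simp
    then have "Q $ 0 = 0" by simp
    then show False unfolding Q_def by simp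
  qed
  have "E * Q ^ 2 = N"
    by (metis EQ PQ mult.assoc mult.commute mult.right_neutral power2_eq_square)
  then have "E = N div Q ^ 2" using Q0 by (metis nonzero_mult_div_cancel_right)
  then show ?thesis unfolding lhs N_def Q_def by simp
qed

end
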